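(* Let $d \ge 2$, let $k \ge 0$, and let $A^{(1)},\dots,A^{(k)}$ be arbitrary parameter matrices of the appropriate sizes. Let $P \in \{0,1\}^{d\times d}$ be any permutation matrix other than the identity. Then there exists a matrix $Y \in \mathbb{R}^{d \times d}$ such that, when the $k$-layer decoder-only (causally masked), attention-only disentangled transformer with parameters $A^{(1)},\dots,A^{(k)}$ is run on the input $X = [P; Y_P]$ with $Y_P = PY$, the matrix $Y$ does not occur as a block of the final residual stream $h^{(k)}$, i.e. $Y$ is not equal to any submatrix of $h^{(k)}$ formed by $d$ consecutive rows and $d$ consecutive columns.
   Context: A permutation matrix $P \in \{0,1\}^{d\times d}$ has $i$-th row equal to the standard basis vector $e_{\pi(i)}$ for a permutation $\pi$ of $\{1,\dots,d\}$. For a matrix $Y \in \mathbb{R}^{d\times d}$ write $Y_P = PY$; the task of inverse permutation learning is to output $Y = P^{-1}Y_P = P^\top Y_P$. The input is $X = [P; Y_P] \in \mathbb{R}^{T \times d}$ (vertical stacking), $T = 2d$, and the initial residual stream is $h^{(0)} = [X, I_T] \in \mathbb{R}^{T \times (d+T)}$ (token embedding $X$ concatenated horizontally with one-hot position embeddings). Softmax $\mathcal{S}$ is applied row-wise, $\mathcal{S}(v)_i = \exp(v_i)/\sum_j\exp(v_j)$; $\mathrm{MASK}(V)_{ij} = V_{ij}$ if $i \ge j$ and $-\infty$ otherwise. The causally masked attention layer is $\mathrm{attn}(h;A) = \mathcal{S}(\mathrm{MASK}(hAh^\top))\,h$. The disentangled transformer computes $h^{(\ell+1)} = [\,h^{(\ell)},\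 \mathrm{attn}(h^{(\ell)};A^{(\ell+1)})\,]$ (horizontal concatenation) for $\ell = 0,\dots,k-1$, with $A^{(\ell+1)}$ square of size equal to the number of columns of $h^{(\ell)}$. The matrix $h^{(\ell)}$ is the residual stream at layer $\ell$; every $h^{(\ell)}$ is a submatrix of $h^{(k)}$. *)

theory Defs
  imports "HOL-Combinatorics.Permutations" Complex_Main
begin

(* Matrices are represented as functions nat => nat => real (row, column),
   indices starting at 0; dimensions are tracked explicitly. *)

definition perm_mat :: "(nat \<Rightarrow> nat) \<Rightarrow> nat \<Rightarrow> nat \<Rightarrow> real" where
  "perm_mat \<pi> i j = (if j = \<pi> i then 1 else 0)"

definition mat_mult :: "nat \<Rightarrow> (nat \<Rightarrow> nat \<Rightarrow> real) \<Rightarrow> (nat \<Rightarrow> nat \<Rightarrow> real) \<Rightarrow> nat \<Rightarrow> nat \<Rightarrow> real" where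
  "mat_mult d M N i j = (\<Sum>l<d. M i l * N l j)"

definition input_X :: "nat \<Rightarrow> (nat \<Rightarrow> nat \<Rightarrow> real) \<Rightarrow> (nat \<Rightarrow> nat \<Rightarrow> real) \<Rightarrow> nat \<Rightarrow> nat \<Rightarrow> real" where
  "input_X d P YP i j = (if i < d then P i j else YP (i - d) j)"

text \<open>Number of columns of the residual stream h^(l): (d + T) * 2^l with T = 2d.\<close>
definition width :: "nat \<Rightarrow> nat \<Rightarrow> nat" where
  "width d l = (d + 2 * d) * 2 ^ l"

text \<open>Initial residual stream h^(0) = [X, I_T], a T x (d+T) matrix.\<close>
definition h0 :: "nat \<Rightarrow> (nat \<Rightarrow> nat \<Rightarrow> real) \<Rightarrow> nat \<Rightarrow> nat \<Rightarrow> real" where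
  "h0 d X i j = (if j < d then X i j else (if j - d = i then 1 else 0))"

text \<open>Causally masked softmax attention S(MASK(h A h^T)) h, for a stream h with c columns.
  Row i of the softmax only gets weight on positions j \<le> i (masked entries are exp(-inf) = 0).\<close>
definition attn :: "nat \<Rightarrow> (nat \<Rightarrow> nat \<Rightarrow> real) \<Rightarrow> (nat \<Rightarrow> nat \<Rightarrow> real) \<Rightarrow> nat \<Rightarrow> nat \<Rightarrow> real" where
  "attn c h A i col =
     (let s = (\<lambda>j. \<Sum>a<c. \<Sum>b<c. h i a * A a b * h j b)
      in (\<Sum>j\<le>i. exp (s j) * h j col) / (\<Sum>j\<le>i. exp (s j)))"

text \<open>Residual stream of the disentangled transformer; A l is the parameter matrix A^(l+1)
  (of size width d l x width d l).
  h^(l+1) = [h^(l), attn(h^(l); A^(l+1))].\<close>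
fun stream :: "nat \<Rightarrow> (nat \<Rightarrow> nat \<Rightarrow> nat \<Rightarrow> real) \<Rightarrow> (nat \<Rightarrow> nat \<Rightarrow> real) \<Rightarrow> nat \<Rightarrow> nat \<Rightarrow> nat \<Rightarrow> real" where
  "stream d A X 0 = h0 d X"
| "stream d A X (Suc l) =
     (\<lambda>i j. if j < width d l then stream d A X l i j
            else attn (width d l) (stream d A X l) (A l) i (j - width d l))"

definition occurs_block :: "nat \<Rightarrow> nat \<Rightarrow> nat \<Rightarrow> (nat \<Rightarrow> nat \<Rightarrow> real) \<Rightarrow> (nat \<Rightarrow> nat \<Rightarrow> real) \<Rightarrow> bool" where
  "occurs_block d nrows ncols Y H =
     (\<exists>r c. r + d \<le> nrows \<and> c + d \<le> ncols \<and> (\<forall>i<d. \<forall>j<d. H (r + i) (c + j) = Y i j))"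

end

theory Submission
  imports Defs
begin

lemma wavg01:
  fixes w v :: "nat \<Rightarrow> real"
  assumes "\<And>j. j \<le> i \<Longrightarrow> 0 \<le> v j \<and> v j \<le> 1"
  shows "0 \<le> (\<Sum>j\<le>i. exp (w j) * v j) / (\<Sum>j\<le>i. exp (w j))
       \<and> (\<Sum>j\<le>i. exp (w j) * v j) / (\<Sum>j\<le>i. exp (w j)) \<le> 1"
proof -
  have pos: "(\<Sum>j\<le>i. exp (w j)) > 0"
    by (rule sum_pos) auto
  have n0: "(\<Sum>j\<le>i. exp (w j) * v j) \<ge> 0"
    using assms by (intro sum_nonneg) auto
  have le: "(\<Sum>j\<le>i. exp (w j) * v j) \<le> (\<Sum>j\<le>i. exp (w j))"
    using assms by (intro sum_mono) (auto intro: mult_left_le)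
  show ?thesis using pos n0 le by (simp add: divide_le_eq_1)
qed

lemma attn01:
  assumes "\<And>j. j \<le> i \<Longrightarrow> 0 \<le> h j col \<and> h j col \<le> 1"
  shows "0 \<le> attn c h A i col \<and> attn c h A i col \<le> 1"
  unfolding attn_def Let_def by (rule wavg01) (use assms in auto)

lemma stream01:
  assumes "\<And>i j. i < N \<Longrightarrow> 0 \<le> h0 d X i j \<and> h0 d X i j \<le> 1"
  shows "i < N \<Longrightarrow> 0 \<le> stream d A X l i j \<and> stream d A X l i j \<le> 1"
proof (induction l arbitrary: i j)
  case 0
  then show ?case using assms by simp
next
  case (Suc l)
  show ?case
  proof (cases "j < width d l")
    case True
    then show ?thesis using Suc by simp
  next
    case False
    have "0 \<le> attn (width d l) (stream d A X l) (A l) i (j - width d l)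
       \<and> attn (width d l) (stream d A X l) (A l) i (j - width d l) \<le> 1"
      by (rule attn01) (use Suc in auto)
    then show ?thesis using False by simp
  qed
qed

lemma exists_desc:
  fixes \<pi> :: "nat \<Rightarrow> nat" and d :: nat
  assumes "\<pi> permutes {..<d}" "\<pi> \<noteq> id"
  shows "\<exists>m<d. \<pi> m < m"
proof (rule ccontr)
  assume nt: "\<not> ?thesis"
  have ge: "m \<le> \<pi> m" if "m < d" for m 
  proof (rule ccontr)
    assume "\<not> m \<le> \<pi> m"
    hence "\<pi> m < m" by simp
    thus False using nt that by auto
  qed
  obtain m0 where m0: "\<pi> m0 \<noteq> m0" using assms(2) by (metis eq_id_iff)
  have "m0 < d" using m0 assms(1) by (meson lessThan_iff permutes_def)
  hence lt: "m0 < \<pi> m0" using ge m0 by force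
  have "(\<Sum>m<d. m) < (\<Sum>m<d. \<pi> m)"
    by (rule sum_strict_mono_ex1) (use ge lt \<open>m0 < d\<close> in auto)
  moreover have "(\<Sum>m<d. \<pi> m) = (\<Sum>m<d. m)"
    using sum.permute[OF assms(1), of id] by (simp add: comp_def)
  ultimately show False by simp
qed

theorem theorem1:
  fixes d k :: nat and \<pi> :: "nat \<Rightarrow> nat" and A :: "nat \<Rightarrow> nat \<Rightarrow> nat \<Rightarrow> real"
  assumes "d \<ge> 2"
    and "\<pi> permutes {..<d}"
    and "\<pi> \<noteq> id"
  shows "\<exists>Y :: nat \<Rightarrow> nat \<Rightarrow> real.
           \<not> occurs_block d (2 * d) (width d k) Y
               (stream d A (input_X d (perm_mat \<pi>) (mat_mult d (perm_mat \<pi>) Y)) k)"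
proof -
  obtain m where m: "m < d" "\<pi> m < m" using exists_desc[OF assms(2,3)] by blast
  define Y :: "nat \<Rightarrow> nat \<Rightarrow> real" where "Y = (\<lambda>a b. if a = \<pi> m then 2 else 0)"
  define X where "X = input_X d (perm_mat \<pi>) (mat_mult d (perm_mat \<pi>) Y)"
  have inj: "inj \<pi>" using assms(2) permutes_inj by blast
  have piltd: "\<And>a. a < d \<Longrightarrow> \<pi> a < d"
    using assms(2) permutes_in_image by fastforce
  have YP: "mat_mult d (perm_mat \<pi>) Y a b = Y (\<pi> a) b" if "a < d" for a b
  proof -
    have "mat_mult d (perm_mat \<pi>) Y a b = (\<Sum>l<d. if l = \<pi> a then Y l b else 0)"
      unfolding mat_mult_def perm_mat_def by (intro sum.cong) auto
    also have "\<dots> = Y (\<pi> a) b" using piltd[OF that] by (simp add: sum.delta)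
    finally show ?thesis .
  qed
  have h0b: "0 \<le> h0 d X i j \<and> h0 d X i j \<le> 1" if "i < d + m" for i j
  proof (cases "j < d")
    case True
    show ?thesis
    proof (cases "i < d")
      case True
      then show ?thesis using \<open>j < d\<close> by (simp add: h0_def X_def input_X_def perm_mat_def)
    next
      case False
      hence "i - d < m" "i - d < d" using that m by auto
      hence "\<pi> (i - d) \<noteq> \<pi> m" using inj by (metis inj_eq less_irrefl)
      then show ?thesis using \<open>j < d\<close> False YP[OF \<open>i - d < d\<close>]
        by (simp add: h0_def X_def input_X_def Y_def)
    qed
  next
    case False
    then show ?thesis by (simp add: h0_def)
  qed
  have sb: "\<And>i j. i < d + m \<Longrightarrow> 0 \<le> stream d A X k i j \<and> stream d A X k i j \<le> 1"
    by (rule stream01[where N="d+m"]) (use h0b in auto)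
  have "\<not> occurs_block d (2 * d) (width d k) Y (stream d A X k)"
  proof
    assume "occurs_block d (2 * d) (width d k) Y (stream d A X k)"
    then obtain r c where rc: "r + d \<le> 2 * d"
      "\<forall>i<d. \<forall>j<d. stream d A X k (r + i) (c + j) = Y i j"
      unfolding occurs_block_def by blast
    have "\<pi> m < d" using m by simp
    hence "stream d A X k (r + \<pi> m) (c + 0) = 2" using rc(2)[rule_format, of "\<pi> m" 0] assms(1) by (simp add: Y_def)
    moreover have "r + \<pi> m < d + m" using rc(1) m by simp
    ultimately show False using sb[of "r + \<pi> m" "c + 0"] by simp
  qed
  thus ?thesis unfolding X_def by blast
qed

end
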